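(* Let $K\ge 1$ and let $H\in\mathbb{C}^{K\times K}$ be of the form $H = D + uv^T$, where $D\in\mathbb{C}^{K\times K}$ is an invertible diagonal matrix and $u,v\in\mathbb{C}^{K\times 1}$ are column vectors all of whose components are nonzero. Suppose $$\alpha := 3 + 3\,v^TD^{-1}u + (v^TD^{-1}u)^2 \neq 1.$$ Then there exist diagonal matrices $D_1,D_2,D_3\in\mathbb{C}^{K\times K}$ such that the matrix $HD_2 + HD_3 H^T D_1 H$ is diagonal and every one of its diagonal entries is nonzero.
   Context: This is the condition for a three-phase interactive scheme on a $K$-user interference channel with forward channel matrix $H$ and reciprocal feedback channel $G=H^T$: in phase 1 sources send $x$ and destinations receive $Hx$; in phase 2 destinations send $D_1 y$ back and sources receive $H^T D_1 y$; in phase 3 sources send $D_2 x + D_3 f$, so destinations receive $(HD_2+HD_3H^TD_1H)x$ (noise ignored). The coding matrices $D_1,D_2,D_3$ must be diagonal since each node only codes over its own signals. The conclusion means each destination $t_i$ receives its desired symbol $x_i$ free of interference after two forward and one reverse transmissions. *)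

theory Defs
  imports "HOL-Analysis.Analysis"
begin

definition is_diag_mat :: "complex ^'n ^'n \<Rightarrow> bool" where
  "is_diag_mat A \<longleftrightarrow> (\<forall>i j. i \<noteq> j \<longrightarrow> A $ i $ j = 0)"

definition outer_prod :: "complex ^'n \<Rightarrow> complex ^'m \<Rightarrow> complex ^'m ^'n" where
  "outer_prod u v = (\<chi> i j. u $ i * v $ j)"

definition bdot :: "complex ^'n \<Rightarrow> complex ^'n \<Rightarrow> complex" where
  "bdot v w = (\<Sum>i\<in>UNIV. v $ i * w $ i)"

end

theory Submission
  imports Defs
begin

lemma if0_mult: "(if P then a else 0) * (b::complex) = (if P then a * b else 0)"
  "b * (if P then a else 0) = (if P then b * a else 0)" by simp_all

lemma mm_entry: "((A::complex^'n^'n) ** B) $ i $ j = (\<Sum>k\<in>UNIV. A$i$k * B$k$j)"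
  by (simp add: matrix_matrix_mult_def)

lemma diag_entry: "is_diag_mat D \<Longrightarrow> D $ i $ j = (if i = j then D $ i $ i else 0)"
  by (simp add: is_diag_mat_def)

lemma diag_left: "((\<chi> i j. if i = j then a i else 0) ** (B::complex^'n^'n)) $ i $ j = a i * B$i$j"
  by (simp add: mm_entry if0_mult)

lemma diag_right: "((B::complex^'n^'n) ** (\<chi> i j. if i = j then a i else 0)) $ i $ j = B$i$j * a j"
  by (simp add: mm_entry if0_mult)

lemma mat1_entry: "(mat 1 :: complex^'n^'n) $ i $ j = (if i = j then 1 else 0)"
  by (simp add: mat_def)

theorem theorem1:
  fixes H D :: "complex ^'n ^'n" and u v :: "complex ^'n"
  assumes "is_diag_mat D" and "invertible D"
    and "\<forall>i. u $ i \<noteq> 0" and "\<forall>i. v $ i \<noteq> 0"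
    and "H = D + outer_prod u v"
    and "3 + 3 * bdot v (matrix_inv D *v u) + bdot v (matrix_inv D *v u)^2 \<noteq> 1"
  shows "\<exists>D1 D2 D3 :: complex ^'n ^'n. is_diag_mat D1 \<and> is_diag_mat D2 \<and> is_diag_mat D3 \<and>
           is_diag_mat (H ** D2 + H ** D3 ** transpose H ** D1 ** H) \<and>
           (\<forall>i. (H ** D2 + H ** D3 ** transpose H ** D1 ** H) $ i $ i \<noteq> 0)"
proof -
  define d where "d i = D $ i $ i" for i
  have Dd: "D $ i $ j = (if i = j then d i else 0)" for i j
    using diag_entry[OF assms(1)] d_def by metis
  have dnz: "d i \<noteq> 0" for i
  proof
    assume "d i = 0"
    obtain B where B: "D ** B = mat 1" using assms(2) unfolding invertible_def by blast
    have "(D ** B) $ i $ i = d i * B $ i $ i"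
      by (simp add: mm_entry Dd if0_mult)
    with B \<open>d i = 0\<close> show False by (simp add: mat1_entry)
  qed
  define Di :: "complex^'n^'n" where "Di = (\<chi> i j. if i = j then 1 / d i else 0)"
  have "D ** Di = mat 1"
    unfolding Di_def by (simp add: diag_right vec_eq_iff Dd mat1_entry dnz)
  have DiD: "Di ** D = mat 1"
    unfolding Di_def by (simp add: diag_left vec_eq_iff Dd mat1_entry dnz)
  define M where "M = matrix_inv D"
  have "D ** M = mat 1 \<and> M ** D = mat 1"
    unfolding M_def matrix_inv_def
    by (rule someI[where x=Di]) (simp add: \<open>D ** Di = mat 1\<close> DiD)
  hence "Di = M"
    by (metis DiD matrix_mul_assoc matrix_mul_lid matrix_mul_rid)
  define w where "w i = u $ i / d i" for i
  define s where "s = (\<Sum>i\<in>UNIV. v $ i * w i)"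
  have "matrix_inv D *v u = (\<chi> i. w i)"
    unfolding M_def[symmetric] \<open>Di = M\<close>[symmetric] Di_def w_def
    by (simp add: vec_eq_iff matrix_vector_mult_def if0_mult)
  hence sdef: "bdot v (matrix_inv D *v u) = s" by (simp add: bdot_def s_def)
  have "(s + 1) * (s + 2) \<noteq> 0"
    using assms(6) unfolding sdef by (simp add: algebra_simps power2_eq_square)
  hence s1: "1 + s \<noteq> 0" and s2: "2 + s \<noteq> 0" by (metis add.commute mult_eq_0_iff)+
  have Hij: "H $ i $ j = (if i = j then d i else 0) + u $ i * v $ j" for i j
    by (simp add: assms(5) Dd outer_prod_def)
  define e where "e k = v $ k / (d k * u $ k)" for k
  define t where "t i = - u $ i / (d i * v $ i * (2 + s) * (1 + s))" for i
  define D1 :: "complex^'n^'n" where "D1 = (\<chi> i j. if i = j then e i else 0)"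
  define D3 :: "complex^'n^'n" where "D3 = (\<chi> i j. if i = j then t i else 0)"
  define N where "N = transpose H ** D1 ** H"
  define P :: "complex^'n^'n" where "P = (\<chi> i j. (if i = j then 1 else 0) - w i * v $ j / (1 + s))"
  define D2 :: "complex^'n^'n" where "D2 = (\<chi> i j. if i = j then P$i$i - t i * N$i$i else 0)"
  have eu: "e k * u $ k * u $ k = v $ k * w k" for k
    using assms(3) dnz by (simp add: e_def w_def field_simps)
  have Nij: "N $ i $ j = (2 + s) * v $ i * v $ j" if "i \<noteq> j" for i j
  proof -
    have "N $ i $ j = (\<Sum>k\<in>UNIV. H$k$i * (e k * H$k$j))"
      unfolding N_def D1_def matrix_mul_assoc[symmetric]
      by (simp add: mm_entry if0_mult transpose_def)
    also have "\<dots> = (\<Sum>k\<in>UNIV. (if k = i then d i * e i * u $ i * v $ j else 0)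
        + (if k = j then v $ i * e j * d j * u $ j else 0)
        + v $ i * v $ j * (e k * u $ k * u $ k))"
      by (rule sum.cong) (auto simp: Hij that algebra_simps)
    also have "\<dots> = d i * e i * u $ i * v $ j + v $ i * e j * d j * u $ j + v $ i * v $ j * s"
      by (simp add: sum.distrib eu s_def sum_distrib_left[symmetric])
    also have "\<dots> = (2 + s) * v $ i * v $ j"
      using assms(3) dnz by (simp add: e_def field_simps)
    finally show ?thesis .
  qed
  have P_eq: "D2 + D3 ** N = P"
  proof -
    have "(D2 + D3 ** N) $ i $ j = P $ i $ j" for i j
    proof (cases "i = j")
      case True thus ?thesis by (simp add: D2_def D3_def diag_left)
    next
      case False
      have nz: "d i * v $ i * (2 + s) * (1 + s) \<noteq> 0" "d i * (1 + s) \<noteq> 0"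
        using assms(4) dnz s1 s2 by auto
      have "t i * ((2 + s) * v $ i * v $ j) = - w i * v $ j / (1 + s)"
        unfolding t_def w_def using nz by (simp add: field_simps)
      thus ?thesis using False by (simp add: D2_def D3_def diag_left Nij P_def)
    qed
    thus ?thesis by (simp add: vec_eq_iff)
  qed
  have HP: "H ** P = D"
  proof -
    have "(H ** P) $ i $ j = D $ i $ j" for i j
    proof -
      have "(H ** P) $ i $ j = (\<Sum>k\<in>UNIV. (if k = i then d i * ((if i = j then 1 else 0) - w i * v $ j / (1 + s)) else 0)
          + (if k = j then u $ i * v $ j else 0) - u $ i * v $ j / (1 + s) * (v $ k * w k))"
        unfolding mm_entry by (rule sum.cong) (auto simp: Hij P_def algebra_simps)
      also have "\<dots> = d i * ((if i = j then 1 else 0) - w i * v $ j / (1 + s)) + u $ i * v $ j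
           - u $ i * v $ j / (1 + s) * s"
        unfolding sum_subtractf sum.distrib sum_distrib_left[symmetric] s_def[symmetric]
        by simp
      also have "\<dots> = D $ i $ j"
      proof -
        have dw2: "d i * (w i * v $ j / (1 + s)) = u $ i * v $ j / (1 + s)"
          using dnz[of i] by (simp add: w_def)
        have key: "u $ i * v $ j / (1 + s) + u $ i * v $ j / (1 + s) * s = u $ i * v $ j"
        proof -
          have "u $ i * v $ j / (1 + s) + u $ i * v $ j / (1 + s) * s = u $ i * v $ j / (1 + s) * (1 + s)"
            by (simp add: distrib_left)
          also have "\<dots> = u $ i * v $ j" using s1 by simp
          finally show ?thesis .
        qed
        have "d i * ((if i = j then 1 else 0) - w i * v $ j / (1 + s)) + u $ i * v $ j
           - u $ i * v $ j / (1 + s) * s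
           = (if i = j then d i else 0) - (u $ i * v $ j / (1 + s) + u $ i * v $ j / (1 + s) * s) + u $ i * v $ j"
          unfolding right_diff_distrib dw2 by simp
        thus ?thesis unfolding key by (simp add: Dd)
      qed
      finally show ?thesis .
    qed
    thus ?thesis by (simp add: vec_eq_iff)
  qed
  have "H ** D2 + H ** D3 ** transpose H ** D1 ** H = D"
  proof -
    have "H ** D2 + H ** D3 ** transpose H ** D1 ** H = H ** (D2 + D3 ** N)"
      by (simp add: N_def matrix_add_ldistrib matrix_mul_assoc)
    thus ?thesis using P_eq HP by simp
  qed
  moreover have "is_diag_mat D1" "is_diag_mat D2" "is_diag_mat D3"
    by (simp_all add: is_diag_mat_def D1_def D2_def D3_def)
  ultimately show ?thesis using assms(1) dnz d_def by metis
qed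

end
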